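(* Let $\mathcal{A}$ be a complex unital algebra which is the direct sum $\mathcal{A}=\bigoplus_{i=1}^\infty\mathcal{A}_i$ of unital subalgebras $\mathcal{A}_i$ with units $I_i$. If $\phi:\mathcal{A}\to\mathcal{A}$ is a linear mapping such that $\phi(A)\circ B+A\circ\phi(B)=0$ for all $A,B\in\mathcal{A}$ with $AB=BA=0$, then $\phi(\mathcal{A}_i)\subseteq\mathcal{A}_i$ for every $i$.
   Context: "Direct sum" here means: every element of $\mathcal{A}$ is uniquely written as $A=\bigoplus_i A_i$ with $A_i\in\mathcal{A}_i$, every family $(A_i)$ with $A_i\in\mathcal{A}_i$ determines an element, operations are componentwise (so $\mathcal{A}_i\mathcal{A}_j=0$ for $i\ne j$), $\mathcal{A}_i$ is identified with the elements supported in the $i$-th coordinate, and the unit is $I=\bigoplus_i I_i$. $X\circ Y=XY+YX$. *)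

theory Defs
  imports Complex_Main
begin

definition complex_algebra :: "(complex \<Rightarrow> 'a::{ring,monoid_mult} \<Rightarrow> 'a) \<Rightarrow> bool" where
  "complex_algebra sm \<longleftrightarrow>
     (\<forall>c x y. sm c (x + y) = sm c x + sm c y) \<and>
     (\<forall>c d x. sm (c + d) x = sm c x + sm d x) \<and>
     (\<forall>c d x. sm c (sm d x) = sm (c * d) x) \<and>
     (\<forall>x. sm 1 x = x) \<and>
     (\<forall>c x y. sm c (x * y) = sm c x * y \<and> sm c (x * y) = x * sm c y)"

text \<open>B is a unital subalgebra (with its own unit u, possibly different from 1).\<close>
definition unital_subalgebra ::
  "(complex \<Rightarrow> 'a::{ring,monoid_mult} \<Rightarrow> 'a) \<Rightarrow> 'a set \<Rightarrow> 'a \<Rightarrow> bool" where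
  "unital_subalgebra sm B u \<longleftrightarrow>
     0 \<in> B \<and>
     (\<forall>x\<in>B. \<forall>y\<in>B. x + y \<in> B \<and> x * y \<in> B) \<and>
     (\<forall>c. \<forall>x\<in>B. sm c x \<in> B) \<and>
     u \<in> B \<and> (\<forall>x\<in>B. u * x = x \<and> x * u = x)"

text \<open>The algebra is the direct sum of the subalgebras Ai i (i :: nat) with units I i,
  in the sense of the context: there is a bijection Phi onto the set of all families
  (A_i) with A_i in Ai i, operations are componentwise, Ai i is identified with the
  elements supported in the i-th coordinate, and the unit is the family of the I i.\<close>
definition is_direct_sum ::
  "(complex \<Rightarrow> 'a::{ring,monoid_mult} \<Rightarrow> 'a) \<Rightarrow> (nat \<Rightarrow> 'a set) \<Rightarrow> (nat \<Rightarrow> 'a) \<Rightarrow> bool" where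
  "is_direct_sum sm Ai I \<longleftrightarrow>
     (\<exists>Phi :: 'a \<Rightarrow> nat \<Rightarrow> 'a.
        bij_betw Phi UNIV {f. \<forall>i. f i \<in> Ai i} \<and>
        (\<forall>x y i. Phi (x + y) i = Phi x i + Phi y i) \<and>
        (\<forall>x y i. Phi (x * y) i = Phi x i * Phi y i) \<and>
        (\<forall>c x i. Phi (sm c x) i = sm c (Phi x i)) \<and>
        (\<forall>i x. x \<in> Ai i \<longleftrightarrow> Phi x = (\<lambda>j. if j = i then x else 0)) \<and>
        (\<forall>i. Phi 1 i = I i))"

definition complex_linear ::
  "(complex \<Rightarrow> 'a::{ring,monoid_mult} \<Rightarrow> 'a) \<Rightarrow> ('a \<Rightarrow> 'a) \<Rightarrow> bool" where
  "complex_linear sm f \<longleftrightarrow>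
     (\<forall>x y. f (x + y) = f x + f y) \<and> (\<forall>c x. f (sm c x) = sm c (f x))"

definition jordan_prod :: "'a::{ring,monoid_mult} \<Rightarrow> 'a \<Rightarrow> 'a" (infixl "\<circ>\<^sub>J" 70) where
  "x \<circ>\<^sub>J y = x * y + y * x"

end

theory Submission
  imports Defs
begin

theorem lemma2p12:
  fixes sm :: "complex \<Rightarrow> 'a::{ring,monoid_mult} \<Rightarrow> 'a"
    and Ai :: "nat \<Rightarrow> 'a set" and I :: "nat \<Rightarrow> 'a" and \<phi> :: "'a \<Rightarrow> 'a"
  assumes "complex_algebra sm"
    and "\<And>i. unital_subalgebra sm (Ai i) (I i)"
    and "is_direct_sum sm Ai I"
    and "complex_linear sm \<phi>"
    and "\<And>A B. A * B = 0 \<Longrightarrow> B * A = 0 \<Longrightarrow> (\<phi> A) \<circ>\<^sub>J B + A \<circ>\<^sub>J (\<phi> B) = 0"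
  shows "\<forall>i. \<phi> ` (Ai i) \<subseteq> Ai i"
proof -
  obtain Phi :: "'a \<Rightarrow> nat \<Rightarrow> 'a" where bij: "bij_betw Phi UNIV {f. \<forall>i. f i \<in> Ai i}"
    and padd: "\<And>x y i. Phi (x + y) i = Phi x i + Phi y i"
    and pmul: "\<And>x y i. Phi (x * y) i = Phi x i * Phi y i"
    and pin: "\<And>i x. x \<in> Ai i \<longleftrightarrow> Phi x = (\<lambda>j. if j = i then x else 0)"
    using assms(3) unfolding is_direct_sum_def by blast
  have inj: "inj Phi" using bij bij_betw_def by blast
  have inA: "\<And>x i. Phi x i \<in> Ai i" using bij unfolding bij_betw_def by blast
  have p0: "\<And>i. Phi 0 i = 0"
    using padd[of 0 0] by (metis add_cancel_right_right add_0)
  have sa: "\<And>c x y. sm c (x + y) = sm c x + sm c y" "\<And>c d x. sm (c + d) x = sm c x + sm d x"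
    "\<And>x. sm 1 x = x"
    using assms(1) unfolding complex_algebra_def by auto
  have half: "\<And>p::'a. p + p = 0 \<Longrightarrow> p = 0"
  proof -
    fix p :: 'a assume h: "p + p = 0"
    have s0: "sm (1/2) 0 = 0" using sa(1)[of "1/2" 0 0] by simp
    have "p = sm (1/2 + 1/2) p" using sa(3) by simp
    also have "\<dots> = sm (1/2) p + sm (1/2) p" by (rule sa(2))
    also have "\<dots> = sm (1/2) (p + p)" using sa(1) by simp
    finally show "p = 0" using h s0 by simp
  qed
  have sub: "\<And>i. unital_subalgebra sm (Ai i) (I i)" by (rule assms(2))
  have Iin: "\<And>j. I j \<in> Ai j" and Iu: "\<And>j x. x \<in> Ai j \<Longrightarrow> I j * x = x \<and> x * I j = x"
    using sub unfolding unital_subalgebra_def by auto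
  show ?thesis
  proof (intro allI subsetI, elim imageE)
    fix i x A assume xA: "x = \<phi> A" and A: "A \<in> Ai i"
    have PA: "Phi A = (\<lambda>j. if j = i then A else 0)" using A pin by blast
    have zero: "Phi x j = 0" if ji: "j \<noteq> i" "i \<noteq> j" for j
    proof -
      have PI: "Phi (I j) = (\<lambda>k. if k = j then I j else 0)" using Iin pin by blast
      have "Phi (A * I j) = Phi 0" proof (rule ext) fix k show "Phi (A * I j) k = Phi 0 k" unfolding pmul p0 PA PI using ji by simp qed
      hence AB: "A * I j = 0" using inj by (simp add: inj_eq)
      have "Phi (I j * A) = Phi 0" proof (rule ext) fix k show "Phi (I j * A) k = Phi 0 k" unfolding pmul p0 PA PI using ji by simp qed
      hence BA: "I j * A = 0" using inj by (simp add: inj_eq)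
      have "\<phi> A \<circ>\<^sub>J I j + A \<circ>\<^sub>J \<phi> (I j) = 0" using assms(5) AB BA by blast
      hence "Phi (\<phi> A \<circ>\<^sub>J I j + A \<circ>\<^sub>J \<phi> (I j)) j = 0" by (simp add: p0)
      hence "Phi x j * I j + I j * Phi x j = 0"
        unfolding jordan_prod_def padd pmul PA PI xA using ji by simp
      moreover have "Phi x j * I j = Phi x j" "I j * Phi x j = Phi x j" using Iu[OF inA[of x j]] by auto
      ultimately show ?thesis using half[of "Phi x j"] by simp
    qed
    define y where "y = Phi x i"
    have yA: "y \<in> Ai i" using inA y_def by simp
    hence "Phi y = (\<lambda>j. if j = i then y else 0)" using pin by blast
    also have "\<dots> = Phi x" proof (rule ext) fix j show "(if j = i then y else 0) = Phi x j" using zero[of j] by (cases "j = i") (auto simp: y_def) qed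
    finally have "y = x" using inj by (simp add: inj_eq)
    thus "x \<in> Ai i" using yA by simp
  qed
qed

end
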